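(* Let $\mathcal{H}$ be a finite-dimensional Hilbert space and $\tau$ an ergodic quantum channel on $\mathcal{H}$ whose unique fixed density matrix is pure, $|\psi_1\rangle\langle\psi_1|$. Then $\tau$ is mixing, i.e. $\tau^n(\rho)\to|\psi_1\rangle\langle\psi_1|$ for every density matrix $\rho$ on $\mathcal{H}$.
   Context: A quantum channel is a linear, completely positive, trace-preserving map on the space of linear operators on $\mathcal{H}$. It is ergodic if it has exactly one fixed point in the set of density matrices on $\mathcal{H}$; it is mixing if there is a density matrix $\rho_*$ with $\tau^n(\rho)\to\rho_*$ for every density matrix $\rho$. *)

theory Defs
  imports "HOL-Analysis.Analysis"
begin

text \<open>The finite-dimensional Hilbert space is modelled as complex^'n for a finite type 'n;
  linear operators on it are matrices complex^'n^'n.\<close>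

definition cinner :: "complex^'n::finite \<Rightarrow> complex^'n \<Rightarrow> complex" where
  "cinner u w = (\<Sum>a\<in>UNIV. cnj (u $ a) * w $ a)"

definition ctrace :: "complex^'n::finite^'n \<Rightarrow> complex" where
  "ctrace X = (\<Sum>i\<in>UNIV. X $ i $ i)"

definition cscale :: "complex \<Rightarrow> complex^'n::finite^'n \<Rightarrow> complex^'n^'n" where
  "cscale c X = (\<chi> i j. c * X $ i $ j)"

definition nonneg_c :: "complex \<Rightarrow> bool" where
  "nonneg_c z \<longleftrightarrow> Im z = 0 \<and> Re z \<ge> 0"

definition psd :: "complex^'n::finite^'n \<Rightarrow> bool" where
  "psd X \<longleftrightarrow> (\<forall>v. nonneg_c (cinner v (X *v v)))"

definition density :: "complex^'n::finite^'n \<Rightarrow> bool" where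
  "density X \<longleftrightarrow> psd X \<and> ctrace X = 1"

text \<open>A k x k block matrix with blocks in complex^'n^'n (an operator on C^k tensor C^n)
  is positive semidefinite.\<close>
definition psd_block :: "nat \<Rightarrow> (nat \<Rightarrow> nat \<Rightarrow> complex^'n::finite^'n) \<Rightarrow> bool" where
  "psd_block k X \<longleftrightarrow>
     (\<forall>v :: nat \<Rightarrow> complex^'n. nonneg_c (\<Sum>i<k. \<Sum>j<k. cinner (v i) (X i j *v v j)))"

definition clinear_map :: "(complex^'n::finite^'n \<Rightarrow> complex^'n^'n) \<Rightarrow> bool" where
  "clinear_map T \<longleftrightarrow> (\<forall>X Y c. T (X + Y) = T X + T Y \<and> T (cscale c X) = cscale c (T X))"

text \<open>Complete positivity: id_k tensor T (acting blockwise) is positive for every k.\<close>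
definition completely_positive :: "(complex^'n::finite^'n \<Rightarrow> complex^'n^'n) \<Rightarrow> bool" where
  "completely_positive T \<longleftrightarrow>
     (\<forall>k X. psd_block k X \<longrightarrow> psd_block k (\<lambda>i j. T (X i j)))"

definition trace_preserving :: "(complex^'n::finite^'n \<Rightarrow> complex^'n^'n) \<Rightarrow> bool" where
  "trace_preserving T \<longleftrightarrow> (\<forall>X. ctrace (T X) = ctrace X)"

definition quantum_channel :: "(complex^'n::finite^'n \<Rightarrow> complex^'n^'n) \<Rightarrow> bool" where
  "quantum_channel T \<longleftrightarrow> clinear_map T \<and> completely_positive T \<and> trace_preserving T"

definition ergodic :: "(complex^'n::finite^'n \<Rightarrow> complex^'n^'n) \<Rightarrow> bool" where
  "ergodic T \<longleftrightarrow> (\<exists>!\<rho>. density \<rho> \<and> T \<rho> = \<rho>)"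

definition mixing :: "(complex^'n::finite^'n \<Rightarrow> complex^'n^'n) \<Rightarrow> bool" where
  "mixing T \<longleftrightarrow> (\<exists>\<rho>s. density \<rho>s \<and> (\<forall>\<rho>. density \<rho> \<longrightarrow> (\<lambda>m. (T ^^ m) \<rho>) \<longlonglongrightarrow> \<rho>s))"

definition ketbra :: "complex^'n::finite \<Rightarrow> complex^'n^'n" where
  "ketbra \<psi> = (\<chi> i j. \<psi> $ i * cnj (\<psi> $ j))"

end

theory Submission
  imports Defs
begin

definition adjm :: "complex^'n::finite^'n \<Rightarrow> complex^'n^'n" where
  "adjm A = (\<chi> i j. cnj (A $ j $ i))"

lemma cinner_adj: "cinner u (A *v w) = cinner (adjm A *v u) w"
proof -
  have "cinner u (A *v w) = (\<Sum>a\<in>UNIV. \<Sum>b\<in>UNIV. cnj (u $ a) * A $ a $ b * w $ b)"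
    unfolding cinner_def matrix_vector_mult_def by (simp add: sum_distrib_left mult.assoc)
  also have "\<dots> = (\<Sum>b\<in>UNIV. \<Sum>a\<in>UNIV. cnj (u $ a) * A $ a $ b * w $ b)"
    by (rule sum.swap)
  also have "\<dots> = cinner (adjm A *v u) w"
    unfolding cinner_def matrix_vector_mult_def adjm_def
    by (simp add: sum_distrib_left sum_distrib_right cnj_sum mult_ac)
  finally show ?thesis .
qed

lemma cinner_add_left: "cinner (u + v) w = cinner u w + cinner v w"
  unfolding cinner_def by (simp add: ring_distribs sum.distrib)
lemma cinner_add_right: "cinner w (u + v) = cinner w u + cinner w v"
  unfolding cinner_def by (simp add: ring_distribs sum.distrib)

lemma mv_add: "(X + Y) *v v = X *v v + Y *v v"
  by (simp add: matrix_vector_mult_def vec_eq_iff ring_distribs sum.distrib)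
lemma mv_add2: "X *v (u + v) = X *v u + X *v v"
  by (simp add: matrix_vector_mult_def vec_eq_iff ring_distribs sum.distrib)

lemma entry_B: fixes A X C :: "complex^'n::finite^'n" shows "(A ** X ** C) $ j $ k = cinner (adjm A *v axis j 1) (X *v (C *v axis k 1))"
proof -
  have ax1: "cinner (axis j 1) v = v $ j" for v :: "complex^'n"
  proof -
    have "cinner (axis j 1) v = (\<Sum>a\<in>UNIV. if a = j then v $ a else 0)"
      unfolding cinner_def by (rule sum.cong) (auto simp: axis_def)
    then show ?thesis by simp
  qed
  have ax2: "(M *v axis k 1) $ i = M $ i $ k" for M :: "complex^'n^'n" and i
  proof -
    have "(M *v axis k 1) $ i = (\<Sum>a\<in>UNIV. if a = k then M $ i $ a else 0)"
      unfolding matrix_vector_mult_def vec_lambda_beta by (rule sum.cong) (auto simp: axis_def)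
    then show ?thesis by simp
  qed
  have "(A ** X ** C) $ j $ k = cinner (axis j 1) ((A ** X ** C) *v axis k 1)"
    by (simp add: ax1 ax2)
  also have "\<dots> = cinner (axis j 1) (A *v (X *v (C *v axis k 1)))"
    by (simp only: matrix_vector_mul_assoc matrix_mul_assoc)
  also have "\<dots> = cinner (adjm A *v axis j 1) (X *v (C *v axis k 1))" by (rule cinner_adj)
  finally show ?thesis .
qed

lemma mm_add_r: "((A::complex^'n::finite^'n) + B) ** C = A ** C + B ** C"
  by (simp add: matrix_matrix_mult_def vec_eq_iff ring_distribs sum.distrib)
lemma mm_diff_r: "((A::complex^'n::finite^'n) - B) ** C = A ** C - B ** C"
  by (simp add: matrix_matrix_mult_def vec_eq_iff left_diff_distrib sum_subtractf)
lemma mm_diff_l: "(C::complex^'n::finite^'n) ** (A - B) = C ** A - C ** B"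
  by (simp add: matrix_matrix_mult_def vec_eq_iff right_diff_distrib sum_subtractf)
lemma mm_zero_l: "(0::complex^'n::finite^'n) ** A = 0"
  by (simp add: matrix_matrix_mult_def vec_eq_iff)
lemma mm_zero_r: "(A::complex^'n::finite^'n) ** 0 = 0"
  by (simp add: matrix_matrix_mult_def vec_eq_iff)
lemma cscale_mm_l: "cscale c A ** B = cscale c (A ** B)"
  by (simp add: matrix_matrix_mult_def vec_eq_iff cscale_def sum_distrib_left mult.assoc)
lemma cscale_mm_r: "A ** cscale c B = cscale c (A ** B)"
  by (simp add: matrix_matrix_mult_def vec_eq_iff cscale_def sum_distrib_left mult_ac)
lemma cscale_add: "cscale c (A + B) = cscale c A + cscale c B"
  by (simp add: vec_eq_iff cscale_def ring_distribs)
lemma cscale_add2: "cscale (a + b) A = cscale a A + cscale b A"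
  by (simp add: vec_eq_iff cscale_def ring_distribs)
lemma cscale_mult: "cscale (a * b) A = cscale a (cscale b A)"
  by (simp add: vec_eq_iff cscale_def mult.assoc)
lemma cscale_1[simp]: "cscale 1 A = A"
  by (simp add: vec_eq_iff cscale_def)
lemma cscale_0[simp]: "cscale 0 A = 0"
  by (simp add: vec_eq_iff cscale_def)
lemma cscale_zero[simp]: "cscale c 0 = 0"
  by (simp add: vec_eq_iff cscale_def)
lemma scaleR_cscale: "r *\<^sub>R (X::complex^'n::finite^'n) = cscale (of_real r) X"
  unfolding vec_eq_iff cscale_def
proof (intro allI)
  fix i j show "(r *\<^sub>R X) $ i $ j = (\<chi> i j. complex_of_real r * X $ i $ j) $ i $ j"
    by (simp only: vector_scaleR_component vec_lambda_beta scaleR_conv_of_real[where 'a=complex])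
qed
lemma cscale_minus: "cscale c (A - B) = cscale c A - cscale c B"
  by (simp add: vec_eq_iff cscale_def right_diff_distrib)

lemma ctrace_add: "ctrace (A + B) = ctrace A + ctrace B"
  by (simp add: ctrace_def sum.distrib)
lemma ctrace_diff: "ctrace (A - B) = ctrace A - ctrace B"
  by (simp add: ctrace_def sum_subtractf)
lemma ctrace_cscale: "ctrace (cscale c A) = c * ctrace A"
  by (simp add: ctrace_def cscale_def sum_distrib_left)
lemma ctrace_zero[simp]: "ctrace 0 = 0"
  by (simp add: ctrace_def)
lemma ctrace_comm: "ctrace ((A::complex^'n::finite^'n) ** B) = ctrace (B ** A)"
proof -
  have "ctrace (A ** B) = (\<Sum>i\<in>UNIV. \<Sum>k\<in>UNIV. A $ i $ k * B $ k $ i)"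
    unfolding ctrace_def matrix_matrix_mult_def by simp
  also have "\<dots> = (\<Sum>k\<in>UNIV. \<Sum>i\<in>UNIV. A $ i $ k * B $ k $ i)" by (rule sum.swap)
  also have "\<dots> = ctrace (B ** A)"
    unfolding ctrace_def matrix_matrix_mult_def by (simp add: mult.commute)
  finally show ?thesis .
qed

lemma B_add: "cinner u ((X + Y) *v w) = cinner u (X *v w) + cinner u (Y *v w)"
  by (simp add: mv_add cinner_add_right)
lemma B_cscale: "cinner u (cscale c X *v w) = c * cinner u (X *v w)"
  by (simp add: cinner_def matrix_vector_mult_def cscale_def sum_distrib_left mult_ac)

lemma ax1: "cinner (axis j 1) v = v $ j"
proof -
  have "cinner (axis j 1) v = (\<Sum>a\<in>UNIV. if a = j then v $ a else 0)"
    unfolding cinner_def by (rule sum.cong) (auto simp: axis_def)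
  then show ?thesis by simp
qed
lemma ax2: "(M *v axis k 1) $ i = M $ i $ k"
proof -
  have "(M *v axis k 1) $ i = (\<Sum>a\<in>UNIV. if a = k then M $ i $ a else 0)"
    unfolding matrix_vector_mult_def vec_lambda_beta by (rule sum.cong) (auto simp: axis_def)
  then show ?thesis by simp
qed

lemma nonneg_c_add: "nonneg_c a \<Longrightarrow> nonneg_c b \<Longrightarrow> nonneg_c (a + b)"
  by (simp add: nonneg_c_def)
lemma nonneg_c_sum: "(\<And>i. i \<in> S \<Longrightarrow> nonneg_c (h i)) \<Longrightarrow> nonneg_c (sum h S)"
  by (induction S rule: infinite_finite_induct) (auto simp: nonneg_c_def)
lemma nonneg_c_mult: "nonneg_c a \<Longrightarrow> nonneg_c b \<Longrightarrow> nonneg_c (a * b)"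
  by (simp add: nonneg_c_def)
lemma nonneg_c_of_real: "r \<ge> 0 \<Longrightarrow> nonneg_c (of_real r)"
  by (simp add: nonneg_c_def)

lemma psd_diag: "psd X \<Longrightarrow> nonneg_c (X $ i $ i)"
  unfolding psd_def by (metis ax1 ax2)
lemma psd_trace: "psd X \<Longrightarrow> nonneg_c (ctrace X)"
  unfolding ctrace_def by (intro nonneg_c_sum psd_diag)
lemma psd_add: "psd X \<Longrightarrow> psd Y \<Longrightarrow> psd (X + Y)"
  unfolding psd_def by (simp add: B_add nonneg_c_add)
lemma psd_cscale: "nonneg_c c \<Longrightarrow> psd X \<Longrightarrow> psd (cscale c X)"
  unfolding psd_def by (simp add: B_cscale nonneg_c_mult)
lemma psd_conj: "psd X \<Longrightarrow> psd (A ** X ** adjm A)"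
  unfolding psd_def
proof
  fix v assume "\<forall>v. nonneg_c (cinner v (X *v v))"
  moreover have "cinner v ((A ** X ** adjm A) *v v) = cinner v (A *v (X *v (adjm A *v v)))"
    by (simp only: matrix_vector_mul_assoc matrix_mul_assoc)
  moreover have "\<dots> = cinner (adjm A *v v) (X *v (adjm A *v v))" by (rule cinner_adj)
  ultimately show "nonneg_c (cinner v ((A ** X ** adjm A) *v v))" by simp
qed

locale unitv =
  fixes \<psi> :: "complex^'n::finite"
  assumes unit: "cinner \<psi> \<psi> = 1"
begin

definition "P = ketbra \<psi>"
definition "Q = mat 1 - P"
definition "f X = cinner \<psi> (X *v \<psi>)"
definition "g X = ctrace (Q ** X ** Q)"

lemma unit': "(\<Sum>k\<in>UNIV. cnj (\<psi> $ k) * \<psi> $ k) = 1"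
  using unit by (simp add: cinner_def)

lemma adjP: "adjm P = P"
  by (simp add: adjm_def P_def ketbra_def vec_eq_iff mult.commute)
lemma adjQ: "adjm Q = Q"
  using adjP by (simp add: adjm_def Q_def vec_eq_iff mat_def)

lemma PP: "P ** P = P"
proof -
  have "(P ** P) $ i $ j = P $ i $ j" for i j
  proof -
    have "(P ** P) $ i $ j = (\<Sum>k\<in>UNIV. \<psi> $ i * cnj (\<psi> $ j) * (cnj (\<psi> $ k) * \<psi> $ k))"
      by (simp add: matrix_matrix_mult_def P_def ketbra_def mult_ac)
    also have "\<dots> = \<psi> $ i * cnj (\<psi> $ j)"
      by (simp add: sum_distrib_left[symmetric] unit')
    finally show ?thesis by (simp add: P_def ketbra_def)
  qed
  then show ?thesis by (simp add: vec_eq_iff)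
qed
lemma PQ: "P ** Q = 0"
  by (simp add: Q_def mm_diff_l PP)
lemma QP: "Q ** P = 0"
  by (simp add: Q_def mm_diff_r PP)
lemma QQ: "Q ** Q = Q"
  by (simp add: Q_def mm_diff_r mm_diff_l PP)
lemma PplusQ: "P + Q = mat 1"
  by (simp add: Q_def)

lemma f_add: "f (X + Y) = f X + f Y" by (simp add: f_def B_add)
lemma f_cscale: "f (cscale c X) = c * f X" by (simp add: f_def B_cscale)
lemma g_add: "g (X + Y) = g X + g Y"
  by (simp add: g_def matrix_add_ldistrib mm_add_r ctrace_add)
lemma g_cscale: "g (cscale c X) = c * g X"
  by (simp add: g_def cscale_mm_l cscale_mm_r ctrace_cscale)

lemma trPX: "ctrace (P ** X) = f X"
proof -
  have "ctrace (P ** X) = (\<Sum>i\<in>UNIV. \<Sum>k\<in>UNIV. \<psi> $ i * cnj (\<psi> $ k) * X $ k $ i)"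
    by (simp add: ctrace_def matrix_matrix_mult_def P_def ketbra_def)
  also have "\<dots> = (\<Sum>k\<in>UNIV. \<Sum>i\<in>UNIV. \<psi> $ i * cnj (\<psi> $ k) * X $ k $ i)" by (rule sum.swap)
  also have "\<dots> = f X"
    by (simp add: f_def cinner_def matrix_vector_mult_def sum_distrib_left mult_ac)
  finally show ?thesis .
qed

lemma trace_split: "ctrace X = f X + g X"
proof -
  have "g X = ctrace (Q ** (Q ** X))"
    unfolding g_def by (rule ctrace_comm)
  also have "\<dots> = ctrace (Q ** X)" by (simp add: matrix_mul_assoc QQ)
  also have "\<dots> = ctrace X - f X"
    by (simp add: Q_def mm_diff_r ctrace_diff trPX)
  finally show ?thesis by simp
qed

lemma PXP: "P ** X ** P = cscale (f X) P"
proof -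
  have "(P ** X ** P) $ i $ j = (\<Sum>k\<in>UNIV. \<Sum>l\<in>UNIV. \<psi> $ i * (cnj (\<psi> $ k) * X $ k $ l * \<psi> $ l) * cnj (\<psi> $ j))" for i j
    apply (simp add: matrix_matrix_mult_def P_def ketbra_def sum_distrib_left sum_distrib_right mult_ac)
    apply (subst sum.swap) apply (simp add: mult_ac)
    done
  moreover have "(\<Sum>k\<in>UNIV. \<Sum>l\<in>UNIV. \<psi> $ i * (cnj (\<psi> $ k) * X $ k $ l * \<psi> $ l) * cnj (\<psi> $ j))
      = \<psi> $ i * f X * cnj (\<psi> $ j)" for i j
    by (simp add: f_def cinner_def matrix_vector_mult_def sum_distrib_left sum_distrib_right mult_ac)
  ultimately show ?thesis by (simp add: vec_eq_iff cscale_def P_def ketbra_def mult_ac)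
qed

lemma gP: "g P = 0" by (simp add: g_def QP mm_zero_l ctrace_def)
lemma fP: "f P = 1"
proof -
  have "(\<Sum>j\<in>UNIV. \<psi> $ i * cnj (\<psi> $ j) * \<psi> $ j) = \<psi> $ i" for i
    using unit' by (simp add: mult.assoc sum_distrib_left[symmetric])
  then have "P *v \<psi> = \<psi>"
    by (simp add: P_def ketbra_def matrix_vector_mult_def vec_eq_iff)
  then show ?thesis by (simp add: f_def unit)
qed
lemma g_PXP: "g (P ** X ** P) = 0" by (simp add: PXP g_cscale gP)
lemma g_PXQ: "g (P ** X ** Q) = 0"
  by (simp add: g_def matrix_mul_assoc QP mm_zero_l ctrace_def)
lemma g_QXP: "g (Q ** X ** P) = 0"
  by (simp add: g_def matrix_mul_assoc[symmetric] PQ mm_zero_r ctrace_def)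
lemma g_QXQ: "g (Q ** X ** Q) = g X"
proof -
  have "Q ** (Q ** X ** Q) ** Q = (Q ** Q) ** X ** (Q ** Q)" by (simp only: matrix_mul_assoc)
  then show ?thesis by (simp add: g_def QQ)
qed
  
lemma decomp: "X = P ** X ** P + P ** X ** Q + Q ** X ** P + Q ** X ** Q"
proof -
  have "X = (P + Q) ** X ** (P + Q)" by (simp add: PplusQ)
  then show ?thesis by (simp add: matrix_add_ldistrib mm_add_r add_ac)
qed

lemma psd_P: "psd P"
proof -
  have "cinner v (P *v v) = cnj (cinner \<psi> v) * cinner \<psi> v" for v
    apply (simp add: P_def ketbra_def cinner_def matrix_vector_mult_def cnj_sum sum_distrib_left
        sum_distrib_right mult_ac)
    apply (subst sum.swap) apply (simp add: mult_ac)
    done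
  moreover have "nonneg_c (cnj z * z)" for z :: complex
    by (simp add: nonneg_c_def)
  ultimately show ?thesis by (simp add: psd_def)
qed
lemma density_P: "density P"
  using psd_P fP gP trace_split by (simp add: density_def)

lemma psd_g: "psd X \<Longrightarrow> nonneg_c (g X)"
  unfolding g_def using psd_conj[of X Q] adjQ psd_trace by metis
lemma psd_f: "psd X \<Longrightarrow> nonneg_c (f X)"
  unfolding f_def psd_def by simp

end

lemma K0:
  assumes h: "\<And>s::real. nonneg_c (of_real s * z + of_real (s^2) * e)"
  shows "z = 0"
proof -
  have h1: "Im z + Im e = 0" "Re z + Re e \<ge> 0" using h[of 1] by (auto simp: nonneg_c_def)
  have h2: "- Im z + Im e = 0" "- Re z + Re e \<ge> 0" using h[of "-1"] by (auto simp: nonneg_c_def)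
  have im: "Im z = 0" using h1 h2 by linarith
  define x where "x = Re z"
  define E where "E = Re e"
  have E0: "E \<ge> 0" using h1 h2 by (simp add: x_def E_def)
  define s where "s = - x / (E + 1)"
  have "s * x + s * s * E \<ge> 0" using h[of s] by (simp add: nonneg_c_def x_def E_def power2_eq_square)
  then have "(s * x + s * s * E) * ((E+1) * (E+1)) \<ge> 0" using E0 by (intro mult_nonneg_nonneg) auto
  moreover have "(s * x + s * s * E) * ((E+1) * (E+1)) = - (x * x)"
  proof -
    have u: "s * (E+1) = -x" using E0 by (simp add: s_def)
    have "(s * x + s * s * E) * ((E+1) * (E+1)) = x*(E+1)*(s*(E+1)) + (s*(E+1))*(s*(E+1))*E"
      by (simp add: algebra_simps)
    also have "\<dots> = - (x * x)" unfolding u by (simp add: algebra_simps)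
    finally show ?thesis .
  qed
  ultimately have "x * x \<le> 0" by simp
  then have "x = 0" by (auto simp: mult_le_0_iff)
  then show ?thesis using im by (simp add: complex_eq_iff x_def)
qed

lemma K:
  assumes h: "\<And>t::complex. nonneg_c (cnj t * a + t * b + t * cnj t * e)"
  shows "a = 0 \<and> b = 0"
proof -
  have "a + b = 0"
  proof (rule K0)
    fix s :: real
    show "nonneg_c (of_real s * (a + b) + of_real (s^2) * e)"
    proof -
      have "cnj (of_real s) * a + of_real s * b + of_real s * cnj (of_real s) * e
          = of_real s * (a+b) + of_real (s^2) * e"
        by (simp add: distrib_left power2_eq_square)
      then show ?thesis using h[of "of_real s"] by simp
    qed
  qed
  moreover have "\<i> * (b - a) = 0"
  proof (rule K0)
    fix s :: real
    show "nonneg_c (of_real s * (\<i> * (b - a)) + of_real (s^2) * e)"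
    proof -
      have "cnj (\<i> * of_real s) * a + \<i> * of_real s * b + \<i> * of_real s * cnj (\<i> * of_real s) * e
          = of_real s * (\<i> * (b - a)) + of_real (s^2) * e"
        by (simp add: right_diff_distrib distrib_left power2_eq_square mult_ac)
      then show ?thesis using h[of "\<i> * of_real s"] by simp
    qed
  qed
  ultimately show ?thesis by simp
qed

lemma cinner_sl: "cinner (t *s u) w = cnj t * cinner u w"
  by (simp add: cinner_def sum_distrib_left mult_ac)
lemma cinner_sr: "cinner u (t *s w) = t * cinner u w"
  by (simp add: cinner_def sum_distrib_left mult_ac)
lemma mv_s: "(X::complex^'n::finite^'n) *v (t *s v) = t *s (X *v v)"
  unfolding matrix_vector_mult_def vec_eq_iff
  by (simp add: sum_distrib_left) (intro allI sum.cong refl, simp add: mult_ac)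

lemma null_vec:
  assumes "psd X" "cinner w (X *v w) = 0"
  shows "cinner w (X *v v) = 0 \<and> cinner v (X *v w) = 0"
proof -
  have "nonneg_c (cnj t * cinner v (X *v w) + t * cinner w (X *v v) + t * cnj t * cinner v (X *v v))" for t
  proof -
    have "cinner (w + t *s v) (X *v (w + t *s v)) =
       cinner w (X *v w) + cnj t * cinner v (X *v w) + t * cinner w (X *v v) + t * cnj t * cinner v (X *v v)"
      by (simp add: mv_add2 cinner_add_left cinner_add_right cinner_sl cinner_sr mv_s mult_ac add_ac distrib_left)
    then show ?thesis using assms unfolding psd_def by (metis add_0)
  qed
  then show ?thesis using K by blast
qed

lemma adjm_add: "adjm (A + B) = adjm A + adjm B"
  by (simp add: adjm_def vec_eq_iff)
lemma adjm_cscale: "adjm (cscale c A) = cscale (cnj c) (adjm A)"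
  by (simp add: adjm_def vec_eq_iff cscale_def)

definition "posmap S \<longleftrightarrow> (\<forall>X Y. S (X + Y) = S X + S Y) \<and> (\<forall>c X. S (cscale c X) = cscale c (S X))
   \<and> (\<forall>X. psd X \<longrightarrow> psd (S X)) \<and> (\<forall>X. ctrace (S X) = ctrace X)"

lemma posmap_id: "posmap id" by (simp add: posmap_def)
lemma posmap_comp: fixes S R :: "complex^'n::finite^'n \<Rightarrow> complex^'n^'n" shows "posmap S \<Longrightarrow> posmap R \<Longrightarrow> posmap (S \<circ> R)"
  by (simp add: posmap_def)
lemma posmap_pow: fixes S :: "complex^'n::finite^'n \<Rightarrow> complex^'n^'n" shows "posmap S \<Longrightarrow> posmap (S ^^ k)"
proof (induction k)
  case 0
  have "S ^^ 0 = id" by (simp add: fun_eq_iff)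
  then show ?case using posmap_id by (simp add: id_def)
next
  case (Suc k) then show ?case using posmap_comp[of S "S ^^ k"] by (simp add: comp_def)
qed

lemma channel_posmap:
  fixes \<tau> :: "complex^'n::finite^'n \<Rightarrow> complex^'n^'n"
  assumes "quantum_channel \<tau>" shows "posmap \<tau>"
proof -
  have "psd (\<tau> X)" if "psd X" for X
  proof -
    have "psd_block 1 (\<lambda>i j. X)" using that by (simp add: psd_block_def psd_def)
    then have "psd_block 1 (\<lambda>i j. \<tau> X)" using assms
      by (simp add: quantum_channel_def completely_positive_def)
    then have h0: "\<forall>v::nat \<Rightarrow> complex^'n. nonneg_c (\<Sum>i<1. \<Sum>j<1. cinner (v i) (\<tau> X *v v j))"
      unfolding psd_block_def .
    have h: "nonneg_c (cinner w (\<tau> X *v w))" for w :: "complex^'n"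
      using h0[rule_format, of "\<lambda>_. w"] by simp
    show ?thesis unfolding psd_def
    proof
      fix v show "nonneg_c (cinner v (\<tau> X *v v))" using h[of v] by simp
    qed
  qed
  then show ?thesis using assms
    by (auto simp: posmap_def quantum_channel_def clinear_map_def trace_preserving_def)
qed

context unitv begin

lemma Qpsi: "Q *v \<psi> = 0"
proof -
  have "(Q ** P) *v \<psi> = 0" by (simp add: QP)
  moreover have "P *v \<psi> = \<psi>"
  proof -
    have "(\<Sum>j\<in>UNIV. \<psi> $ i * cnj (\<psi> $ j) * \<psi> $ j) = \<psi> $ i" for i
      using unit' by (simp add: mult.assoc sum_distrib_left[symmetric])
    then show ?thesis by (simp add: P_def ketbra_def matrix_vector_mult_def vec_eq_iff)
  qed
  ultimately show ?thesis by (metis matrix_vector_mul_assoc)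
qed

lemma f_QXQ: "f (Q ** X ** Q) = 0"
proof -
  have "(Q ** X ** Q) *v \<psi> = Q *v (X *v (Q *v \<psi>))" by (simp only: matrix_vector_mul_assoc matrix_mul_assoc)
  then show ?thesis by (simp add: f_def Qpsi cinner_def)
qed

lemma expansion:
  assumes S: "posmap S" and SP: "S P = P"
  shows "g (S ((P + cscale t Q) ** X ** adjm (P + cscale t Q))) =
     cnj t * g (S (P ** X ** Q)) + t * g (S (Q ** X ** P)) + t * cnj t * g (S (Q ** X ** Q))"
proof -
  have "(P + cscale t Q) ** X ** adjm (P + cscale t Q) =
     P ** X ** P + cscale (cnj t) (P ** X ** Q) + cscale t (Q ** X ** P) + cscale (t * cnj t) (Q ** X ** Q)"
    by (simp add: adjm_add adjm_cscale adjP adjQ matrix_add_ldistrib mm_add_r cscale_mm_l cscale_mm_r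
        cscale_mult[symmetric] cscale_add mult_ac add_ac)
  moreover have "g (S (P ** X ** P)) = 0"
    using S SP by (simp add: PXP posmap_def g_cscale gP)
  ultimately show ?thesis using S by (simp add: posmap_def g_add g_cscale)
qed

lemma cross:
  assumes S: "posmap S" and SP: "S P = P" and X: "psd X"
    and mono: "\<forall>Y. psd Y \<longrightarrow> nonneg_c (g Y - g (S Y))"
  shows "g (S X) = g (S (Q ** X ** Q))"
proof -
  define A where "A t = P + cscale t Q" for t
  have psdA: "psd (A t ** X ** adjm (A t))" for t using psd_conj X by blast
  have e1: "g (S (A t ** X ** adjm (A t))) =
     cnj t * g (S (P ** X ** Q)) + t * g (S (Q ** X ** P)) + t * cnj t * g (S (Q ** X ** Q))" for t
    unfolding A_def by (rule expansion[OF S SP])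
  have e2: "g (A t ** X ** adjm (A t)) = t * cnj t * g X" for t
    using expansion[OF posmap_id, of t X] by (simp add: A_def g_PXQ g_QXP g_QXQ)
  have "nonneg_c (cnj t * (- g (S (P ** X ** Q))) + t * (- g (S (Q ** X ** P)))
      + t * cnj t * (g X - g (S (Q ** X ** Q))))" for t
  proof -
    have "cnj t * (- g (S (P ** X ** Q))) + t * (- g (S (Q ** X ** P)))
      + t * cnj t * (g X - g (S (Q ** X ** Q))) = g (A t ** X ** adjm (A t)) - g (S (A t ** X ** adjm (A t)))"
      by (simp add: e1 e2 algebra_simps)
    then show ?thesis using mono psdA[of t] by metis
  qed
  then have "- g (S (P ** X ** Q)) = 0 \<and> - g (S (Q ** X ** P)) = 0" by (rule K)
  moreover have "S X = S (P ** X ** P) + S (P ** X ** Q) + S (Q ** X ** P) + S (Q ** X ** Q)"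
    using decomp[of X] S unfolding posmap_def by metis
  moreover have "g (S (P ** X ** P)) = 0"
    using S SP by (simp add: PXP posmap_def g_cscale gP)
  ultimately show ?thesis by (simp add: g_add)
qed

lemma cross':
  assumes S: "posmap S" and SP: "S P = P" and X: "psd X"
  shows "g (S X) = g (S (Q ** X ** Q))"
proof -
  define A where "A t = P + cscale t Q" for t
  have psdA: "psd (A t ** X ** adjm (A t))" for t using psd_conj X by blast
  have e1: "g (S (A t ** X ** adjm (A t))) =
     cnj t * g (S (P ** X ** Q)) + t * g (S (Q ** X ** P)) + t * cnj t * g (S (Q ** X ** Q))" for t
    unfolding A_def by (rule expansion[OF S SP])
  have "nonneg_c (cnj t * g (S (P ** X ** Q)) + t * g (S (Q ** X ** P))
      + t * cnj t * g (S (Q ** X ** Q)))" for t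
    using S psdA[of t] e1[of t] psd_g unfolding posmap_def by metis
  then have "g (S (P ** X ** Q)) = 0 \<and> g (S (Q ** X ** P)) = 0" by (rule K)
  moreover have "S X = S (P ** X ** P) + S (P ** X ** Q) + S (Q ** X ** P) + S (Q ** X ** Q)"
    using decomp[of X] S unfolding posmap_def by metis
  moreover have "g (S (P ** X ** P)) = 0"
    using S SP by (simp add: PXP posmap_def g_cscale gP)
  ultimately show ?thesis by (simp add: g_add)
qed

lemma mono1:
  assumes S: "posmap S" and SP: "S P = P" and X: "psd X"
  shows "g (S X) = g X - f (S (Q ** X ** Q))"
proof -
  have "ctrace (S (Q ** X ** Q)) = g X"
    using S trace_split[of "Q ** X ** Q"] by (simp add: posmap_def f_QXQ g_QXQ)
  then have "g X = f (S (Q ** X ** Q)) + g (S (Q ** X ** Q))" using trace_split by simp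
  then show ?thesis using cross'[OF S SP X] by simp
qed

end

lemma ax12: "cinner (axis i 1) (X *v axis j 1) = X $ i $ j"
  by (simp add: ax1 ax2)

lemma psd_quad:
  assumes "psd X"
  shows "nonneg_c (X $ i $ i + t * X $ i $ j + cnj t * X $ j $ i + cnj t * t * X $ j $ j)"
proof -
  have "cinner (axis i 1 + t *s axis j 1) (X *v (axis i 1 + t *s axis j 1)) =
     X $ i $ i + t * X $ i $ j + cnj t * X $ j $ i + cnj t * t * X $ j $ j"
    by (simp add: mv_add2 cinner_add_left cinner_add_right cinner_sl cinner_sr mv_s ax12 add_ac distrib_left)
  then show ?thesis using assms unfolding psd_def by metis
qed

lemma density_diag:
  assumes "density X" shows "0 \<le> Re (X $ i $ i)" "Re (X $ i $ i) \<le> 1" "Im (X $ i $ i) = 0"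
proof -
  have nn: "nonneg_c (X $ k $ k)" for k using assms psd_diag by (auto simp: density_def)
  then show "0 \<le> Re (X $ i $ i)" "Im (X $ i $ i) = 0" by (auto simp: nonneg_c_def)
  have "(\<Sum>k\<in>UNIV. Re (X $ k $ k)) = 1"
    using assms by (simp add: density_def ctrace_def flip: Re_sum)
  moreover have "Re (X $ i $ i) \<le> (\<Sum>k\<in>UNIV. Re (X $ k $ k))"
    by (rule member_le_sum) (use nn in \<open>auto simp: nonneg_c_def\<close>)
  ultimately show "Re (X $ i $ i) \<le> 1" by simp
qed

lemma density_entry:
  assumes "density X" shows "cmod (X $ i $ j) \<le> 2"
proof -
  have p: "psd X" using assms by (simp add: density_def)
  note d = density_diag[OF assms, of i] density_diag[OF assms, of j]
  have q1: "nonneg_c (X $ i $ i + X $ i $ j + X $ j $ i + X $ j $ j)" using psd_quad[OF p, of i 1 j] by simp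
  have q2: "nonneg_c (X $ i $ i - X $ i $ j - X $ j $ i + X $ j $ j)" using psd_quad[OF p, of i "-1" j] by simp
  have q3: "nonneg_c (X $ i $ i + \<i> * X $ i $ j - \<i> * X $ j $ i + X $ j $ j)" using psd_quad[OF p, of i "\<i>" j] by simp
  have q4: "nonneg_c (X $ i $ i - \<i> * X $ i $ j + \<i> * X $ j $ i + X $ j $ j)" using psd_quad[OF p, of i "-\<i>" j] by simp
  have "\<bar>Re (X $ i $ j)\<bar> \<le> 1" "\<bar>Im (X $ i $ j)\<bar> \<le> 1"
    using q1 q2 q3 q4 d by (auto simp: nonneg_c_def)
  then show ?thesis using cmod_le[of "X $ i $ j"] by linarith
qed

lemma density_norm:
  assumes "density (X::complex^'n::finite^'n)" shows "norm X \<le> of_nat CARD('n) * of_nat CARD('n) * 2"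
proof -
  have "norm X \<le> (\<Sum>i\<in>UNIV. norm (X $ i))" by (simp add: norm_vec_def L2_set_le_sum)
  also have "\<dots> \<le> (\<Sum>i\<in>UNIV. \<Sum>j\<in>UNIV. norm (X $ i $ j))"
    by (intro sum_mono) (simp add: norm_vec_def L2_set_le_sum)
  also have "\<dots> \<le> (\<Sum>i\<in>(UNIV::'n set). \<Sum>j\<in>(UNIV::'n set). (2::real))"
    apply (rule sum_mono)+
    apply (rule density_entry[OF assms])
    done
  finally show ?thesis by simp
qed

lemma lin_cont:
  fixes h :: "complex^'n::finite^'n \<Rightarrow> 'b::real_normed_vector"
  assumes "\<And>X Y. h (X + Y) = h X + h Y" "\<And>r X. h (r *\<^sub>R X) = r *\<^sub>R h X"
  shows "isCont h X" "continuous_on S h"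
proof -
  have "linear h" by (rule linearI) (use assms in auto)
  then have "bounded_linear h" by (simp add: linear_conv_bounded_linear)
  then show "isCont h X" "continuous_on S h" by (auto simp: linear_continuous_at linear_continuous_on)
qed

lemma lin_cont_c:
  fixes h :: "complex^'n::finite^'n \<Rightarrow> complex"
  assumes "\<And>X Y. h (X + Y) = h X + h Y" "\<And>c X. h (cscale c X) = c * h X"
  shows "isCont h X" "continuous_on S h"
  using assms by (auto intro!: lin_cont simp: scaleR_cscale scaleR_conv_of_real)

lemma closed_nonneg:
  fixes h :: "complex^'n::finite^'n \<Rightarrow> complex"
  assumes "continuous_on UNIV h"
  shows "closed {X. nonneg_c (h X)}"
proof -
  have "{X. nonneg_c (h X)} = {X. Im (h X) = 0} \<inter> {X. 0 \<le> Re (h X)}"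
    by (auto simp: nonneg_c_def)
  moreover have "closed {X. Im (h X) = 0}"
    by (rule closed_Collect_eq) (auto intro!: continuous_intros assms)
  moreover have "closed {X. 0 \<le> Re (h X)}"
    by (rule closed_Collect_le) (auto intro!: continuous_intros assms)
  ultimately show ?thesis by auto
qed

lemma closed_density: "closed {X::complex^'n::finite^'n. density X}"
proof -
  have "{X::complex^'n^'n. density X} = {X. \<forall>v. nonneg_c (cinner v (X *v v))} \<inter> {X. ctrace X = 1}"
    by (auto simp: density_def psd_def)
  moreover have "closed {X::complex^'n^'n. \<forall>v. nonneg_c (cinner v (X *v v))}"
    by (intro closed_Collect_all closed_nonneg lin_cont_c) (auto simp: B_add B_cscale)
  moreover have "closed {X::complex^'n^'n. ctrace X = 1}"
    by (intro closed_Collect_eq continuous_on_const lin_cont_c) (auto simp: ctrace_add ctrace_cscale)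
  ultimately show ?thesis by auto
qed

lemma compact_density: "compact {X::complex^'n::finite^'n. density X}"
  unfolding compact_eq_bounded_closed
  using closed_density density_norm by (auto simp: bounded_iff)

context unitv begin

lemma zeroG:
  assumes d: "density \<sigma>" and g0: "g \<sigma> = 0"
  shows "\<sigma> = P"
proof -
  have p: "psd \<sigma>" using d by (simp add: density_def)
  define w where "w j = Q *v axis j 1" for j
  have ent: "(Q ** \<sigma> ** Q) $ j $ k = cinner (w j) (\<sigma> *v w k)" for j k
    unfolding w_def using entry_B[of Q \<sigma> Q j k] adjQ by simp
  have nn: "nonneg_c (cinner (w j) (\<sigma> *v w j))" for j using p by (simp add: psd_def)
  have "(\<Sum>j\<in>UNIV. cinner (w j) (\<sigma> *v w j)) = 0"
    using g0 by (simp add: g_def ctrace_def ent)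
  then have "(\<Sum>j\<in>UNIV. Re (cinner (w j) (\<sigma> *v w j))) = 0"
    by (metis Re_sum zero_complex.simps(1))
  then have "Re (cinner (w j) (\<sigma> *v w j)) = 0" for j
    using nn by (subst (asm) sum_nonneg_eq_0_iff) (auto simp: nonneg_c_def)
  then have z: "cinner (w j) (\<sigma> *v w j) = 0" for j
    using nn[of j] by (simp add: nonneg_c_def complex_eq_iff)
  have z1: "cinner (w j) (\<sigma> *v v) = 0" "cinner v (\<sigma> *v w j) = 0" for j v
    using null_vec[OF p z[of j]] by auto
  have e1: "(P ** \<sigma> ** Q) $ j $ k = 0" for j k
  proof -
    have "(P ** \<sigma> ** Q) $ j $ k = cinner (adjm P *v axis j 1) (\<sigma> *v w k)"
      unfolding w_def by (rule entry_B)
    then show ?thesis by (simp only: z1(2))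
  qed
  have e2: "(Q ** \<sigma> ** P) $ j $ k = 0" for j k
  proof -
    have "(Q ** \<sigma> ** P) $ j $ k = cinner (w j) (\<sigma> *v (P *v axis k 1))"
      unfolding w_def by (simp only: entry_B adjQ)
    then show ?thesis by (simp only: z1(1))
  qed
  have e3: "(Q ** \<sigma> ** Q) $ j $ k = 0" for j k
    by (simp only: ent z1(1))
  have f1: "f \<sigma> = 1" using d g0 trace_split[of \<sigma>] by (simp add: density_def)
  have "\<sigma> $ j $ k = P $ j $ k" for j k
  proof -
    have "\<sigma> $ j $ k = (P ** \<sigma> ** P + P ** \<sigma> ** Q + Q ** \<sigma> ** P + Q ** \<sigma> ** Q) $ j $ k"
      using decomp[of \<sigma>] by simp
    also have "\<dots> = (P ** \<sigma> ** P) $ j $ k" using e1 e2 e3 by simp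
    also have "\<dots> = P $ j $ k" by (simp add: PXP f1)
    finally show ?thesis .
  qed
  then show ?thesis by (simp add: vec_eq_iff)
qed

end

locale chan = unitv \<psi> for \<psi> :: "complex^'n::finite" +
  fixes \<tau> :: "complex^'n^'n \<Rightarrow> complex^'n^'n"
  assumes qc: "quantum_channel \<tau>" and erg: "ergodic \<tau>" and fixP: "\<tau> P = P"
begin

lemma pm: "posmap \<tau>" using qc by (rule channel_posmap)
lemma pmk: "posmap (\<tau> ^^ k)" using pm by (rule posmap_pow)
lemma TkP: "(\<tau> ^^ k) P = P" by (induction k) (simp_all add: fixP)

lemma tau_density: "density X \<Longrightarrow> density (\<tau> X)"
  using pm by (simp add: posmap_def density_def)

lemma step: "psd X \<Longrightarrow> g (\<tau> X) = g X - f (\<tau> (Q ** X ** Q))"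
  by (rule mono1[OF pm fixP])

lemma step_nn: "psd X \<Longrightarrow> nonneg_c (f (\<tau> (Q ** X ** Q)))"
  using pm psd_f psd_conj[of X Q] adjQ by (metis posmap_def)

lemma monoK: "psd Y \<Longrightarrow> nonneg_c (g Y - g ((\<tau> ^^ k) Y))"
proof (induction k)
  case 0 then show ?case by (simp add: nonneg_c_def)
next
  case (Suc k)
  have pk: "psd ((\<tau> ^^ k) Y)" using pmk Suc.prems by (simp add: posmap_def)
  have "g Y - g ((\<tau> ^^ Suc k) Y) = (g Y - g ((\<tau> ^^ k) Y)) + f (\<tau> (Q ** (\<tau> ^^ k) Y ** Q))"
    using step[OF pk] by simp
  then show ?case using Suc nonneg_c_add step_nn[OF pk] by metis
qed

lemma keyR:
  assumes d: "density \<sigma>" and L: "\<And>k. Re (g ((\<tau> ^^ k) \<sigma>)) = L"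
  shows "f ((\<tau> ^^ k) (Q ** \<sigma> ** Q)) = 0"
proof -
  have p: "psd \<sigma>" using d by (simp add: density_def)
  have gk: "g ((\<tau> ^^ k) \<sigma>) = of_real L" for k
  proof -
    have "psd ((\<tau> ^^ k) \<sigma>)" using pmk p by (simp add: posmap_def)
    then have "Im (g ((\<tau> ^^ k) \<sigma>)) = 0" using psd_g by (simp add: nonneg_c_def)
    then show ?thesis using L[of k] by (simp add: complex_eq_iff)
  qed
  have c: "g ((\<tau> ^^ k) \<sigma>) = g ((\<tau> ^^ k) (Q ** \<sigma> ** Q))"
    by (rule cross[OF pmk TkP p]) (use monoK in auto)
  have "ctrace ((\<tau> ^^ k) (Q ** \<sigma> ** Q)) = g \<sigma>"
    using pmk trace_split[of "Q ** \<sigma> ** Q"] by (simp add: posmap_def f_QXQ g_QXQ)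
  then have "f ((\<tau> ^^ k) (Q ** \<sigma> ** Q)) = g \<sigma> - g ((\<tau> ^^ k) \<sigma>)"
    using trace_split[of "(\<tau> ^^ k) (Q ** \<sigma> ** Q)"] c by (simp add: c eq_diff_eq)
  also have "\<dots> = 0" using gk[of k] gk[of 0] by simp
  finally show ?thesis .
qed

definition "Cset = {\<rho>. density \<rho> \<and> (\<forall>k. f ((\<tau> ^^ k) \<rho>) = 0)}"

lemma Tk_cscale: "(\<tau> ^^ k) (cscale c X) = cscale c ((\<tau> ^^ k) X)"
  using pmk by (simp add: posmap_def)
lemma Tk_add: "(\<tau> ^^ k) (X + Y) = (\<tau> ^^ k) X + (\<tau> ^^ k) Y"
  using pmk by (simp add: posmap_def)

lemma Cset_empty: "Cset = {}"
proof (rule ccontr)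
  assume ne: "Cset \<noteq> {}"
  have closed: "closed Cset"
  proof -
    have "Cset = {X. density X} \<inter> {X. \<forall>k. f ((\<tau> ^^ k) X) = 0}" by (auto simp: Cset_def)
    moreover have "closed {X. \<forall>k. f ((\<tau> ^^ k) X) = 0}"
      by (intro closed_Collect_all closed_Collect_eq continuous_on_const lin_cont_c)
        (auto simp: Tk_add Tk_cscale f_add f_cscale)
    ultimately show ?thesis using closed_density by auto
  qed
  have compact: "compact Cset"
  proof -
    have "Cset = {X. density X} \<inter> Cset" by (auto simp: Cset_def)
    then show ?thesis using compact_Int_closed[OF compact_density closed] by simp
  qed
  have convex: "convex Cset"
    unfolding convex_def
  proof (intro ballI allI impI)
    fix x y u v assume x: "x \<in> Cset" and y: "y \<in> Cset" and u: "0 \<le> (u::real)" and v: "0 \<le> v" and uv: "u + v = 1"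
    have px: "psd x" "ctrace x = 1" "\<And>k. f ((\<tau> ^^ k) x) = 0" using x by (auto simp: Cset_def density_def)
    have py: "psd y" "ctrace y = 1" "\<And>k. f ((\<tau> ^^ k) y) = 0" using y by (auto simp: Cset_def density_def)
    have "psd (cscale (of_real u) x + cscale (of_real v) y)"
      using u v px py by (intro psd_add psd_cscale) (auto simp: nonneg_c_def)
    moreover have "ctrace (cscale (of_real u) x + cscale (of_real v) y) = 1"
      using px py uv by (simp add: ctrace_add ctrace_cscale flip: of_real_add)
    moreover have "f ((\<tau> ^^ k) (cscale (of_real u) x + cscale (of_real v) y)) = 0" for k
      using px py by (simp add: Tk_add Tk_cscale f_add f_cscale)
    ultimately show "u *\<^sub>R x + v *\<^sub>R y \<in> Cset"
      by (simp add: Cset_def density_def scaleR_cscale)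
  qed
  have cont: "continuous_on Cset \<tau>"
    using pm by (intro lin_cont) (auto simp: posmap_def scaleR_cscale)
  have maps: "\<tau> \<in> Cset \<rightarrow> Cset"
  proof
    fix x assume x: "x \<in> Cset"
    have "f ((\<tau> ^^ k) (\<tau> x)) = 0" for k
    proof -
      have "(\<tau> ^^ k) (\<tau> x) = (\<tau> ^^ Suc k) x" by (simp only: funpow_Suc_right comp_apply)
      moreover have "f ((\<tau> ^^ Suc k) x) = 0" using x unfolding Cset_def by blast
      ultimately show ?thesis by simp
    qed
    then show "\<tau> x \<in> Cset" using x tau_density by (simp add: Cset_def)
  qed
  obtain x where x: "x \<in> Cset" "\<tau> x = x" using brouwer[OF compact convex ne cont maps] by blast
  have "density x" using x by (simp add: Cset_def)
  then have "x = P" using erg x(2) density_P fixP unfolding ergodic_def by blast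
  moreover have "f x = 0" 
  proof -
    have "f ((\<tau> ^^ 0) x) = 0" using x(1) unfolding Cset_def by blast
    then show ?thesis by simp
  qed
  ultimately show False using fP by simp
qed

end

context chan begin

lemma conv:
  assumes rho: "density \<rho>"
  shows "(\<lambda>m. (\<tau> ^^ m) \<rho>) \<longlonglongrightarrow> P"
proof -
  define x where "x n = (\<tau> ^^ n) \<rho>" for n
  have xS: "x (Suc n) = \<tau> (x n)" for n by (simp add: x_def)
  have dx: "density (x n)" for n
    by (induction n) (use rho in \<open>simp_all add: x_def tau_density\<close>)
  have px: "psd (x n)" for n using dx by (simp add: density_def)
  define G where "G n = Re (g (x n))" for n
  have "decseq G"
  proof (rule decseq_SucI)
    fix n
    have "g (x (Suc n)) = g (x n) - f (\<tau> (Q ** x n ** Q))" using xS step[OF px] by simp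
    then show "G (Suc n) \<le> G n" using step_nn[OF px[of n]] by (simp add: G_def nonneg_c_def)
  qed
  moreover have G0: "\<forall>i. 0 \<le> G i" using psd_g px by (simp add: G_def nonneg_c_def)
  ultimately obtain L where GL: "G \<longlonglongrightarrow> L" and "\<forall>i. L \<le> G i" by (rule decseq_convergent)
  have L0: "0 \<le> L" using GL G0 by (intro LIMSEQ_le_const) auto
  show ?thesis
  proof (rule ccontr)
    assume "\<not> (\<lambda>m. (\<tau> ^^ m) \<rho>) \<longlonglongrightarrow> P"
    then have "\<not> x \<longlonglongrightarrow> P" by (simp add: x_def[abs_def])
    then obtain e where e: "e > 0" and ne: "\<not> eventually (\<lambda>n. dist (x n) P < e) sequentially"
      unfolding tendsto_iff by blast
    obtain r :: "nat \<Rightarrow> nat" where r: "strict_mono r" and rn: "\<And>n. \<not> dist (x (r n)) P < e"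
      using not_eventually_sequentiallyD[OF ne] by auto
    have "seq_compact {X. density X}" using compact_density by (rule compact_imp_seq_compact)
    then obtain \<sigma> and r' :: "nat \<Rightarrow> nat" where \<sigma>: "\<sigma> \<in> {X. density X}" and r': "strict_mono r'"
      and lim0: "((x \<circ> r) \<circ> r') \<longlonglongrightarrow> \<sigma>"
      unfolding seq_compact_def using dx by (metis comp_apply mem_Collect_eq)
    define s where "s = r \<circ> r'"
    have s: "strict_mono s" using r r' by (simp add: s_def strict_mono_o)
    have lim: "(\<lambda>n. x (s n)) \<longlonglongrightarrow> \<sigma>" using lim0 by (simp add: s_def comp_def)
    have ds: "density \<sigma>" using \<sigma> by simp
    have "(\<lambda>n. dist (x (s n)) P) \<longlonglongrightarrow> dist \<sigma> P" by (intro tendsto_intros lim)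
    moreover have "\<forall>n. e \<le> dist (x (s n)) P" using rn by (simp add: s_def not_less)
    ultimately have "e \<le> dist \<sigma> P" by (intro LIMSEQ_le_const) auto
    then have sP: "\<sigma> \<noteq> P" using e by auto
    have Lk: "Re (g ((\<tau> ^^ k) \<sigma>)) = L" for k
    proof -
      have "isCont (\<lambda>X. Re (g ((\<tau> ^^ k) X))) \<sigma>"
        by (rule lin_cont) (simp_all add: Tk_add g_add scaleR_cscale Tk_cscale g_cscale)
      then have a: "(\<lambda>n. Re (g ((\<tau> ^^ k) (x (s n))))) \<longlonglongrightarrow> Re (g ((\<tau> ^^ k) \<sigma>))"
        using lim by (rule isCont_tendsto_compose)
      have sm: "strict_mono (\<lambda>n. k + s n)" using s by (simp add: strict_mono_def)
      have "(G \<circ> (\<lambda>n. k + s n)) \<longlonglongrightarrow> L" using GL sm by (rule LIMSEQ_subseq_LIMSEQ)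
      moreover have "(G \<circ> (\<lambda>n. k + s n)) = (\<lambda>n. Re (g ((\<tau> ^^ k) (x (s n)))))"
        by (simp add: G_def x_def fun_eq_iff funpow_add)
      ultimately show ?thesis using a LIMSEQ_unique by metis
    qed
    have gs: "g \<sigma> = of_real L"
    proof -
      have "Im (g \<sigma>) = 0" using psd_g ds by (simp add: density_def nonneg_c_def)
      then show ?thesis using Lk[of 0] by (simp add: complex_eq_iff)
    qed
    show False
    proof (cases "L = 0")
      case True
      then have "\<sigma> = P" using zeroG[OF ds] gs by simp
      then show False using sP by simp
    next
      case False
      then have Lp: "L > 0" using L0 by simp
      define \<rho>0 where "\<rho>0 = cscale (of_real (1/L)) (Q ** \<sigma> ** Q)"
      have "psd \<rho>0" unfolding \<rho>0_def
        using Lp ds psd_conj[of \<sigma> Q] adjQ by (intro psd_cscale) (auto simp: nonneg_c_def density_def)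
      moreover have "ctrace \<rho>0 = 1"
        using Lp gs by (simp add: \<rho>0_def ctrace_cscale g_def[symmetric])
      moreover have "f ((\<tau> ^^ k) \<rho>0) = 0" for k
        using keyR[OF ds Lk] by (simp add: \<rho>0_def Tk_cscale f_cscale)
      ultimately have "\<rho>0 \<in> Cset" by (simp add: Cset_def density_def)
      then show False using Cset_empty by simp
    qed
  qed
qed

end

theorem mainTheorem15:
  fixes \<tau> :: "complex^'n::finite^'n \<Rightarrow> complex^'n^'n" and \<psi>1 :: "complex^'n"
  assumes "quantum_channel \<tau>"
    and "ergodic \<tau>"
    and "cinner \<psi>1 \<psi>1 = 1"
    and "\<tau> (ketbra \<psi>1) = ketbra \<psi>1"
  shows "mixing \<tau> \<and> (\<forall>\<rho>. density \<rho> \<longrightarrow> (\<lambda>m. (\<tau> ^^ m) \<rho>) \<longlonglongrightarrow> ketbra \<psi>1)"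
proof -
  interpret chan \<psi>1 \<tau>
    using assms by (unfold_locales) (simp_all add: unitv.P_def[OF unitv.intro[OF assms(3)]])
  have PP: "P = ketbra \<psi>1" by (simp add: P_def)
  have c: "\<forall>\<rho>. density \<rho> \<longrightarrow> (\<lambda>m. (\<tau> ^^ m) \<rho>) \<longlonglongrightarrow> ketbra \<psi>1"
    using conv PP by auto
  moreover have "mixing \<tau>" unfolding mixing_def using c density_P PP by auto
  ultimately show ?thesis by simp
qed

end
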